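(* Let $X\sim \mathcal{UNB}(r,p)$, i.e. $X$ has probability mass function $p(x)=\frac{q^{x} p^r}{1+x} \binom{r+x-1}{x} {}_2F_1(1, r+x; 2+x; q)$ for $x=0,1,2,\dots$. Then the cumulative distribution function of $X$ is \[ F_X(x)= F_Y(x)+ \frac{r+x}{x+2}\binom{r+x-1}{x} p^r q^{x+1}\, {}_2F_1\left(1,r+x+1;x+3;q\right), \] where $F_Y$ is the cumulative distribution function of $Y\sim \mathcal{NB}(r,p)$.
   Context: Parameters $r>0$, $0<p<1$, $q=1-p$. The Uniform-negative binomial distribution $\mathcal{UNB}(r,p)$ is defined by the stochastic representation $X\mid N\sim$ discrete uniform on $\{0,1,\dots,N\}$ and $N\sim \mathcal{NB}(r,p)$, the negative binomial distribution with probability mass function $P(N=n)=\binom{r+n-1}{n}p^r q^n$, $n=0,1,2,\dots$. The Gauss hypergeometric function is ${}_2F_1(a,b;c;z)=\sum_{n=0}^\infty \frac{(a)_n(b)_n}{(c)_n}\frac{z^n}{n!}$ for $|z|<1$, with $(a)_n$ the Pochhammer symbol (rising factorial). *)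

theory Defs
  imports Complex_Main
begin

definition hyp2F1 :: "real \<Rightarrow> real \<Rightarrow> real \<Rightarrow> real \<Rightarrow> real" where
  "hyp2F1 a b c z =
     (\<Sum>n. pochhammer a n * pochhammer b n / pochhammer c n * z ^ n / fact n)"

definition nb_pmf :: "real \<Rightarrow> real \<Rightarrow> nat \<Rightarrow> real" where
  "nb_pmf r p n = ((r + real n - 1) gchoose n) * p powr r * (1 - p) ^ n"

definition nb_cdf :: "real \<Rightarrow> real \<Rightarrow> nat \<Rightarrow> real" where
  "nb_cdf r p x = (\<Sum>k\<le>x. nb_pmf r p k)"

definition unb_pmf :: "real \<Rightarrow> real \<Rightarrow> nat \<Rightarrow> real" where
  "unb_pmf r p x = (1 - p) ^ x * p powr r / (1 + real x) * ((r + real x - 1) gchoose x)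
                   * hyp2F1 1 (r + real x) (2 + real x) (1 - p)"

definition unb_cdf :: "real \<Rightarrow> real \<Rightarrow> nat \<Rightarrow> real" where
  "unb_cdf r p x = (\<Sum>k\<le>x. unb_pmf r p k)"

end

theory Submission
  imports Defs "HOL-Real_Asymp.Real_Asymp"
begin

definition hterm :: "real \<Rightarrow> real \<Rightarrow> real \<Rightarrow> nat \<Rightarrow> real" where
  "hterm b c q n = pochhammer b n / pochhammer c n * q ^ n"

lemma hyp_eq: "hyp2F1 1 b c q = (\<Sum>n. hterm b c q n)"
  unfolding hyp2F1_def hterm_def
  by (simp add: pochhammer_fact[symmetric])

lemma hterm_Suc:
  assumes "b > 0" "c > 0"
  shows "hterm b c q (Suc n) = b / c * q * hterm (b+1) (c+1) q n"
  unfolding hterm_def using assms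
  by (simp add: pochhammer_rec field_simps)

lemma hterm_Suc':
  assumes "b > 0" "c > 0"
  shows "hterm b c q (Suc n) = (b + real n) / (c + real n) * q * hterm b c q n"
  unfolding hterm_def using assms pochhammer_pos[of c n]
  by (simp add: pochhammer_rec' field_simps)

lemma hterm_summable:
  assumes "b > 0" "c > 0" "0 \<le> q" "q < 1"
  shows "summable (hterm b c q)"
proof -
  have lim: "(\<lambda>n. (b + real n) / (c + real n) * q) \<longlonglongrightarrow> 1 * q"
    by (intro tendsto_mult tendsto_const) real_asymp
  have "1 * q < (1 + q) / 2" using assms by simp
  from order_tendstoD(2)[OF lim this]
  obtain N where N: "\<And>n. n \<ge> N \<Longrightarrow> (b + real n) / (c + real n) * q < (1 + q) / 2"
    unfolding eventually_sequentially by blast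
  show ?thesis
  proof (rule summable_ratio_test[of "(1+q)/2" N])
    show "(1 + q) / 2 < 1" using assms by simp
  next
    fix n assume "N \<le> n"
    have pos: "hterm b c q n \<ge> 0" unfolding hterm_def using assms pochhammer_pos[of b n] pochhammer_pos[of c n]
      by simp
    have "norm (hterm b c q (Suc n)) = (b + real n) / (c + real n) * q * hterm b c q n"
      using hterm_Suc'[OF assms(1,2)] pos assms by simp
    also have "\<dots> \<le> (1 + q) / 2 * hterm b c q n"
      using N[OF \<open>N \<le> n\<close>] pos by (intro mult_right_mono) auto
    finally show "norm (hterm b c q (Suc n)) \<le> (1 + q) / 2 * norm (hterm b c q n)"
      using pos by simp
  qed
qed

lemma hyp_rec:
  assumes "b > 0" "c > 0" "0 \<le> q" "q < 1"
  shows "hyp2F1 1 b c q = 1 + b / c * q * hyp2F1 1 (b+1) (c+1) q"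
proof -
  have s1: "summable (hterm b c q)" by (rule hterm_summable[OF assms])
  have s2: "summable (hterm (b+1) (c+1) q)" by (rule hterm_summable) (use assms in auto)
  have "(\<Sum>n. hterm b c q (Suc n)) = (\<Sum>n. hterm b c q n) - hterm b c q 0"
    by (rule suminf_split_head[OF s1])
  moreover have "(\<Sum>n. hterm b c q (Suc n)) = b / c * q * (\<Sum>n. hterm (b+1) (c+1) q n)"
    using hterm_Suc[OF assms(1,2)] suminf_mult[OF s2, of "b/c*q"] by simp
  moreover have "hterm b c q 0 = 1" by (simp add: hterm_def)
  ultimately show ?thesis unfolding hyp_eq by simp
qed

lemma unb_rec:
  assumes "r > 0" "0 < p" "p < 1"
  shows "unb_pmf r p m = nb_pmf r p m / (real m + 1) + unb_pmf r p (Suc m)"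
proof -
  define q where "q = 1 - p"
  define C where "C = (r + real m - 1) gchoose m"
  define H where "H = hyp2F1 1 (r + real m + 1) (real m + 3) q"
  have h: "hyp2F1 1 (r + real m) (2 + real m) q = 1 + (r + real m) / (2 + real m) * q * H"
    unfolding H_def using hyp_rec[of "r + real m" "2 + real m" q] assms
    by (simp add: q_def add_ac) 
  have C': "(r + real (Suc m) - 1) gchoose (Suc m) = (r + real m) / (real m + 1) * C"
    using gbinomial_absorption[of m "r + real m"] unfolding C_def
    by (simp add: field_simps add_ac)
  have H': "hyp2F1 1 (r + real (Suc m)) (2 + real (Suc m)) q = H"
    unfolding H_def by (simp add: add_ac)
  show ?thesis
    unfolding unb_pmf_def nb_pmf_def q_def[symmetric] C_def[symmetric] h H' C'
    apply (simp add: field_simps)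
    apply (subgoal_tac "2 + (real m * real m + real m * 3) \<noteq> 0")
     apply (simp add: field_simps)
    by (smt (verit) of_nat_0_le_iff mult_nonneg_nonneg)
qed

lemma cdf_aux:
  assumes "r > 0" "0 < p" "p < 1"
  shows "unb_cdf r p x = nb_cdf r p x + (real x + 1) * unb_pmf r p (Suc x)"
proof (induction x)
  case 0
  then show ?case unfolding unb_cdf_def nb_cdf_def using unb_rec[OF assms, of 0] by simp
next
  case (Suc x)
  have "unb_cdf r p (Suc x) = unb_cdf r p x + unb_pmf r p (Suc x)"
    unfolding unb_cdf_def by simp
  also have "\<dots> = nb_cdf r p x + (real x + 2) * unb_pmf r p (Suc x)"
    using Suc by (simp add: algebra_simps)
  also have "\<dots> = nb_cdf r p x + nb_pmf r p (Suc x) + (real (Suc x) + 1) * unb_pmf r p (Suc (Suc x))"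
    using unb_rec[OF assms, of "Suc x"] by (simp add: field_simps)
  also have "\<dots> = nb_cdf r p (Suc x) + (real (Suc x) + 1) * unb_pmf r p (Suc (Suc x))"
    unfolding nb_cdf_def by simp
  finally show ?case .
qed

theorem theorem3:
  fixes r p :: real and x :: nat
  assumes "r > 0" and "0 < p" and "p < 1"
  shows "unb_cdf r p x =
           nb_cdf r p x
           + (r + real x) / (real x + 2) * ((r + real x - 1) gchoose x) * p powr r * (1 - p) ^ (x + 1)
             * hyp2F1 1 (r + real x + 1) (real x + 3) (1 - p)"
proof -
  have C': "(r + real (Suc x) - 1) gchoose (Suc x) = (r + real x) / (real x + 1) * ((r + real x - 1) gchoose x)"
    using gbinomial_absorption[of x "r + real x"]
    by (simp add: field_simps add_ac)
  have H': "hyp2F1 1 (r + real (Suc x)) (2 + real (Suc x)) (1 - p) = hyp2F1 1 (r + real x + 1) (real x + 3) (1 - p)"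
    by (simp add: add_ac)
  show ?thesis
    unfolding cdf_aux[OF assms] unb_pmf_def C' H'
  proof -
    have aux: "(a + 1) * (Q ^ Suc x * P / (1 + (a + 1)) * ((R + a) / (a + 1) * C) * H) =
      (R + a) / (a + 2) * C * P * Q ^ (x + 1) * H" if "a \<ge> 0" for a Q P R C H :: real
      using that apply (simp add: field_simps)
      apply (subgoal_tac "a * a + (2 + a * 3) \<noteq> 0")
       apply (simp add: field_simps)
      by (smt (verit) mult_nonneg_nonneg)
    show "nb_cdf r p x + (real x + 1) * ((1 - p) ^ Suc x * p powr r / (1 + real (Suc x)) *
        ((r + real x) / (real x + 1) * (r + real x - 1 gchoose x)) * hyp2F1 1 (r + real x + 1) (real x + 3) (1 - p)) =
      nb_cdf r p x + (r + real x) / (real x + 2) * (r + real x - 1 gchoose x) * p powr r * (1 - p) ^ (x + 1) *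
        hyp2F1 1 (r + real x + 1) (real x + 3) (1 - p)"
      using aux[of "real x"] by (simp add: add_ac)
  qed
qed

end
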